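(* Let $(b,w)\in\mathbb{N}^2$ (where $\mathbb{N}=\{0,1,2,\dots\}$). Then there exists a partition $\lambda$ such that $(b(\lambda),w(\lambda))=(b,w)$ if and only if \[(b-w)^2\le b.\] Furthermore, the same statement holds if one restricts to partitions into distinct parts.
   Context: A partition is a finite nonincreasing sequence $\lambda=(\lambda_1,\lambda_2,\dots,\lambda_r)$ of positive integers (the empty sequence is the unique partition of $0$); set $\lambda_i=0$ for $i<1$ and $i>r$. A partition is into distinct parts if all $\lambda_i$ are distinct. Its Ferrers graph consists of unit squares, with row $i$ (rows indexed from $i=0$) containing $\lambda_{i+1}$ squares, left-justified, columns indexed from $0$. Colour the square in row $r$ and column $c$ black if $r+c$ is even and white if $r+c$ is odd (chess colouring, the corner square in row $0$, column $0$ being black). Then $b(\lambda)$ is the number of black squares and $w(\lambda)$ the number of white squares; explicitly $b(\lambda)=\sum_{j}\lceil \lambda_{2j+1}/2\rceil+\sum_j\lfloor \lambda_{2j}/2\rfloor$ and $w(\lambda)=\sum_{j}\lfloor \lambda_{2j+1}/2\rfloor+\sum_j\lceil \lambda_{2j}/2\rceil$. *)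

theory Defs
  imports Main
begin

text \<open>A partition is a finite nonincreasing list of positive integers.
  The list entry xs ! r (0-indexed) is lambda_(r+1), the length of row r of the Ferrers graph.\<close>
definition is_partition :: "nat list \<Rightarrow> bool" where
  "is_partition xs \<longleftrightarrow> sorted_wrt (\<ge>) xs \<and> (\<forall>x\<in>set xs. 0 < x)"

definition is_distinct_partition :: "nat list \<Rightarrow> bool" where
  "is_distinct_partition xs \<longleftrightarrow> is_partition xs \<and> distinct xs"

definition ferrers :: "nat list \<Rightarrow> (nat \<times> nat) set" where
  "ferrers xs = {(r, c). r < length xs \<and> c < xs ! r}"

definition black :: "nat list \<Rightarrow> nat" where
  "black xs = card {(r, c) \<in> ferrers xs. even (r + c)}"

definition white :: "nat list \<Rightarrow> nat" where
  "white xs = card {(r, c) \<in> ferrers xs. odd (r + c)}"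

end

theory Submission
  imports Defs
begin

lemma ferrers_Nil: "ferrers [] = {}" by (simp add: ferrers_def)

lemma ferrers_Cons: "ferrers (x#xs) = (\<lambda>c. (0,c)) ` {..<x} \<union> (\<lambda>(r,c). (Suc r, c)) ` ferrers xs"
  unfolding ferrers_def
  apply (rule set_eqI)
  by (auto simp: nth_Cons split: nat.splits)

lemma finite_ferrers: "finite (ferrers xs)"
  by (induction xs) (auto simp: ferrers_Nil ferrers_Cons)

lemma cnt_even: "card {c::nat. c < x \<and> even c} = (x+1) div 2 \<and> card {c::nat. c < x \<and> odd c} = x div 2"
proof (induction x)
  case 0 then show ?case by simp
next
  case (Suc x)
  have e: "{c::nat. c < Suc x \<and> even c} = {c. c < x \<and> even c} \<union> (if even x then {x} else {})" by (auto simp: less_Suc_eq)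
  have o: "{c::nat. c < Suc x \<and> odd c} = {c. c < x \<and> odd c} \<union> (if odd x then {x} else {})" by (auto simp: less_Suc_eq)
  show ?case using Suc by (auto simp: e o)
qed

lemma black_white_Cons:
  "black (x#xs) = (x+1) div 2 + white xs \<and> white (x#xs) = x div 2 + black xs"
proof -
  let ?f = "\<lambda>(r,c). (Suc r, c)"
  have inj: "inj ?f" by (auto simp: inj_def)
  have s1: "{(r, c) \<in> ferrers (x#xs). even (r + c)} = (\<lambda>c. (0,c)) ` {c. c < x \<and> even c} \<union> ?f ` {(r, c) \<in> ferrers xs. odd (r + c)}"
    unfolding ferrers_Cons by auto
  have s2: "{(r, c) \<in> ferrers (x#xs). odd (r + c)} = (\<lambda>c. (0,c)) ` {c. c < x \<and> odd c} \<union> ?f ` {(r, c) \<in> ferrers xs. even (r + c)}"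
    unfolding ferrers_Cons by auto
  have fin: "finite {(r, c) \<in> ferrers xs. P r c}" for P using finite_ferrers[of xs] by (simp add: case_prod_unfold)
  have c1: "card ((\<lambda>c. (0::nat,c)) ` A) = card A" for A :: "nat set" by (rule card_image) (auto simp: inj_on_def)
  have c2: "card (?f ` A) = card A" for A :: "(nat*nat) set" by (rule card_image) (auto simp: inj_on_def)
  have "black (x#xs) = card ((\<lambda>c. (0::nat,c)) ` {c. c < x \<and> even c}) + card (?f ` {(r, c) \<in> ferrers xs. odd (r + c)})"
    unfolding black_def s1 by (intro card_Un_disjoint finite_imageI fin) auto
  moreover have "white (x#xs) = card ((\<lambda>c. (0::nat,c)) ` {c. c < x \<and> odd c}) + card (?f ` {(r, c) \<in> ferrers xs. even (r + c)})"
    unfolding white_def s2 by (intro card_Un_disjoint finite_imageI fin) auto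
  ultimately show ?thesis using cnt_even[of x] by (simp add: c1 c2 black_def white_def)
qed

lemma black_white_Nil: "black [] = 0" "white [] = 0"
  by (auto simp: black_def white_def ferrers_Nil)

definition hh :: "int \<Rightarrow> int" where "hh T = (if T > 0 then 2*T - 1 else -2*T)"
definition hd0 :: "nat list \<Rightarrow> nat" where "hd0 xs = (case xs of [] \<Rightarrow> 0 | x#_ \<Rightarrow> x)"

lemma key_step:
  fixes x :: nat and D' H' :: int and S :: int
  assumes "hh D' \<le> int x"
  shows "hh ((if odd x then 1 else 0) - D') \<le> int x \<and> hh ((if odd x then 1 else 0) - D') \<le> hh D' + 1 \<and> hh D' \<ge> 0"
  using assms unfolding hh_def by (cases "odd x") presburger+

lemma key:
  assumes "sorted_wrt (\<ge>) xs"
  shows "hh (int (black xs) - int (white xs)) \<le> int (hd0 xs) \<and>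
    hh (int (black xs) - int (white xs)) * (hh (int (black xs) - int (white xs)) + 1) \<le> 2 * int (black xs + white xs)"
  using assms
proof (induction xs)
  case Nil then show ?case by (simp add: black_white_Nil hh_def hd0_def)
next
  case (Cons x xs)
  define D' where "D' = int (black xs) - int (white xs)"
  have IH: "hh D' \<le> int (hd0 xs)" "hh D' * (hh D' + 1) \<le> 2 * int (black xs + white xs)"
    using Cons by (auto simp: D'_def)
  have "hd0 xs \<le> x" using Cons.prems by (cases xs) (auto simp: hd0_def)
  hence hx: "hh D' \<le> int x" using IH by linarith
  have D: "int (black (x#xs)) - int (white (x#xs)) = (if odd x then 1 else 0) - D'"
    using black_white_Cons[of x xs] unfolding D'_def by (cases "odd x") (auto elim!: oddE evenE)
  have S: "int (black (x#xs) + white (x#xs)) = int x + int (black xs + white xs)"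
    using black_white_Cons[of x xs] by (cases "odd x") (auto elim!: oddE evenE)
  define H where "H = hh ((if odd x then 1 else 0) - D')"
  have h1: "H \<le> int x" "H \<le> hh D' + 1" "hh D' \<ge> 0" using key_step[OF hx] by (auto simp: H_def)
  have h0: "H \<ge> 0" unfolding H_def hh_def by auto
  have "H * (H + 1) \<le> 2 * int x + 2 * int (black xs + white xs)"
  proof (cases "H = 0")
    case True then show ?thesis by simp
  next
    case False
    have "(H - 1) * H \<le> hh D' * (hh D' + 1)"
      using h1 h0 False by (intro mult_mono) auto
    then show ?thesis using IH(2) h1 by (simp add: algebra_simps)
  qed
  then show ?case using D S h1 by (simp add: H_def hd0_def)
qed

lemma necessity:
  assumes "is_partition xs"
  shows "(int (black xs) - int (white xs))^2 \<le> int (black xs)"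
proof -
  define d where "d = int (black xs) - int (white xs)"
  have k: "hh d * (hh d + 1) \<le> 2 * int (black xs + white xs)"
    using key[of xs] assms by (simp add: is_partition_def d_def)
  have n: "int (black xs + white xs) = 2 * int (black xs) - d" by (simp add: d_def)
  show ?thesis
  proof (cases "d > 0")
    case True
    hence "hh d = 2*d - 1" by (simp add: hh_def)
    with k n have "(2*d-1)*(2*d) \<le> 2 * (2 * int (black xs) - d)" by simp
    hence "4*d^2 \<le> 4 * int (black xs)" by (simp add: algebra_simps power2_eq_square)
    thus ?thesis by (simp add: d_def)
  next
    case False
    hence "hh d = -2*d" by (simp add: hh_def)
    with k n have "(-2*d)*(-2*d+1) \<le> 2 * (2 * int (black xs) - d)" by simp
    hence "4*d^2 \<le> 4 * int (black xs)" by (simp add: algebra_simps power2_eq_square)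
    thus ?thesis by (simp add: d_def)
  qed
qed

fun stair :: "nat \<Rightarrow> nat list" where
  "stair 0 = []" | "stair (Suc n) = Suc n # stair n"

lemma set_stair: "set (stair n) = {1..n}"
  by (induction n) (auto simp: atLeastAtMostSuc_conv)

lemma stair_sorted: "sorted_wrt (>) (stair n)"
  by (induction n) (auto simp: set_stair)

lemma stair_bw: "black (stair (2*k)) = k^2 \<and> white (stair (2*k)) = k^2 + k \<and>
   black (stair (2*k+1)) = (k+1)^2 \<and> white (stair (2*k+1)) = k^2 + k"
proof (induction k)
  case 0 then show ?case by (simp add: black_white_Nil black_white_Cons)
next
  case (Suc k)
  have e1: "stair (2 * Suc k) = (2*k+2) # stair (2*k+1)" by (simp add: numeral_2_eq_2)
  have e2: "stair (2 * Suc k + 1) = (2*k+3) # stair (2*k+2)"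
    by (simp add: numeral_2_eq_2 numeral_3_eq_3)
  have a: "black (stair (2 * Suc k)) = (k+1)^2 \<and> white (stair (2 * Suc k)) = (k+1)^2 + (k+1)"
    using Suc black_white_Cons[of "2*k+2" "stair (2*k+1)"] unfolding e1 by (simp add: power2_eq_square)
  moreover have "black (stair (2 * Suc k + 1)) = (k+2)^2 \<and> white (stair (2 * Suc k + 1)) = (k+1)^2 + (k+1)"
    using a black_white_Cons[of "2*k+3" "stair (2*k+2)"] unfolding e2
    by (simp add: power2_eq_square)
  ultimately show ?case by (simp add: power2_eq_square)
qed

lemma bump: "black ((x + 2*m) # xs) = black (x#xs) + m \<and> white ((x + 2*m) # xs) = white (x#xs) + m"
  using black_white_Cons[of x xs] black_white_Cons[of "x+2*m" xs] by auto

lemma construct: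
  assumes "N > 0"
  shows "is_distinct_partition ((N + 2*m) # stair (N - 1))"
proof -
  have "sorted_wrt (>) ((N + 2*m) # stair (N - 1))" using stair_sorted[of "N-1"] assms
    by (auto simp: set_stair)
  moreover have "sorted_wrt (>) ys \<Longrightarrow> sorted_wrt (\<ge>) ys \<and> distinct ys" for ys :: "nat list"
    by (induction ys) auto
  ultimately show ?thesis using assms unfolding is_distinct_partition_def is_partition_def
    by (auto simp: set_stair)
qed

lemma sufficiency:
  assumes "(int b - int w)^2 \<le> int b"
  shows "\<exists>xs. is_distinct_partition xs \<and> black xs = b \<and> white xs = w"
proof (cases "b \<ge> w")
  case True
  define k where "k = b - w"
  have "int k = int b - int w" using True by (simp add: k_def)
  hence "int (k^2) \<le> int b" using assms by simp
  hence kb: "k^2 \<le> b" by linarith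
  define m where "m = b - k^2"
  show ?thesis
  proof (cases "k = 0")
    case True
    hence bw: "b = w" "m = b" using \<open>b \<ge> w\<close> by (auto simp: k_def m_def)
    show ?thesis
    proof (cases "m = 0")
      case True
      then show ?thesis using bw by (intro exI[of _ "[]"]) (auto simp: black_white_Nil is_distinct_partition_def is_partition_def)
    next
      case False
      have "is_distinct_partition [2*m]" using False by (simp add: is_distinct_partition_def is_partition_def)
      moreover have "black [0 + 2*m] = m" "white [0+2*m] = m"
        using bump[of 0 m "[]"] by (auto simp: black_white_Cons black_white_Nil)
      ultimately show ?thesis using bw by (intro exI[of _ "[2*m]"]) auto
    qed
  next
    case False
    hence "k \<noteq> 0" by simp
    then obtain j where j: "k = j + 1" using not0_implies_Suc by fastforce
    have st: "(2*j+1) # stair (2*j) = stair (2*j+1)" by simp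
    have "black (stair (2*j+1)) = k^2" "white (stair (2*j+1)) = k^2 - k" using stair_bw[of j] j by (auto simp: power2_eq_square)
    hence "black ((2*j+1 + 2*m) # stair (2*j)) = b" "white ((2*j+1 + 2*m) # stair (2*j)) = w"
      proof -
      have kk: "k \<le> k^2" by (simp add: power2_eq_square)
      have bw: "b = w + k" using True by (simp add: k_def)
      have "k^2 + m = b" "k^2 - k + m = w" using kk kb bw unfolding m_def by linarith+
      thus "black ((2*j+1 + 2*m) # stair (2*j)) = b" "white ((2*j+1 + 2*m) # stair (2*j)) = w"
        using bump[of "2*j+1" m "stair (2*j)"] st \<open>black (stair (2*j+1)) = k^2\<close> \<open>white (stair (2*j+1)) = k^2 - k\<close>
        by auto
    qed
    moreover have "is_distinct_partition ((2*j+1 + 2*m) # stair (2*j+1 - 1))" by (rule construct) simp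
    ultimately show ?thesis by auto
  qed
next
  case False
  define k where "k = w - b"
  have "int k = -(int b - int w)" using False by (simp add: k_def)
  hence "int b - int w = - int k" by simp
  hence "int (k^2) = (int b - int w)^2" by simp
  hence "int (k^2) \<le> int b" using assms by simp
  hence kb: "k^2 \<le> b" by linarith
  define m where "m = b - k^2"
  have "k \<noteq> 0" using False by (simp add: k_def)
  then obtain j where j: "k = j + 1" using not0_implies_Suc by fastforce
  have st: "(2*j+2) # stair (2*j+1) = stair (2*(j+1))" by (simp add: numeral_2_eq_2)
  have s1: "black ((2*j+2) # stair (2*j+1)) = k^2" "white ((2*j+2) # stair (2*j+1)) = k^2 + k"
    using stair_bw[of k] unfolding st j by auto
  have wb: "w = b + k" using False by (simp add: k_def)
  have "k^2 + m = b" "k^2 + k + m = w" using kb wb unfolding m_def by linarith+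
  hence "black ((2*j+2 + 2*m) # stair (2*j+1)) = b" "white ((2*j+2 + 2*m) # stair (2*j+1)) = w"
    using bump[of "2*j+2" m "stair (2*j+1)"] s1 by auto
  moreover have "is_distinct_partition ((2*j+2 + 2*m) # stair (2*j+2 - 1))" by (rule construct) simp
  ultimately show ?thesis by (auto simp: numeral_2_eq_2)
qed

theorem theoremA:
  fixes b w :: nat
  shows "((\<exists>xs. is_partition xs \<and> black xs = b \<and> white xs = w)
            \<longleftrightarrow> (int b - int w)^2 \<le> int b)
       \<and> ((\<exists>xs. is_distinct_partition xs \<and> black xs = b \<and> white xs = w)
            \<longleftrightarrow> (int b - int w)^2 \<le> int b)"
  using necessity sufficiency unfolding is_distinct_partition_def by blast

end
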